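(* Let $A,c>0$ be constants. For $n=1,2,\dots$ let $N_n$ be an index set and for $k\in N_n$ let $\mathbf M_{k,n}\in\mathbb R^{n\times p_n}$, $S_{k,n}\subseteq\{1,\dots,p_n\}$ and $\boldsymbol\beta_{k,n}\in\mathbb R^{p_n}$; let $\lambda_n=A\sqrt{\log(p_n)/n}$. Suppose that for some $\xi>c$, $$\sup_{k\in N_n}\frac{|S_{k,n}|\sqrt{\log(p_n)^2/n}}{\kappa^2(\xi,S_{k,n},\mathbf M_{k,n})}\to0\quad\text{and}\quad\sup_{k\in N_n}\sqrt{\log(p_n)}\,\|(\boldsymbol\beta_{k,n})_{S_{k,n}^c}\|_1\to0.$$ Then there exists $\xi'>c$ such that for every $c_1>0$, $\sup_{k\in N_n}\sqrt{\log(p_n)}\,\mu(c_1\lambda_n,\xi',\boldsymbol\beta_{k,n},\mathbf M_{k,n})\to0$.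
   Context: With $\mathscr C(\xi,T)=\{\mathbf u\ne\mathbf0:\|\mathbf u_{T^c}\|_1\le\xi\|\mathbf u_T\|_1\}$, the compatibility factor is $\kappa(\xi,T,\mathbf M)=\inf\{(\|\mathbf M\mathbf u\|_2/\sqrt n)/(\|\mathbf u_T\|_1/|T|):\mathbf u\in\mathscr C(\xi,T)\}$. For $\xi>1$, $\lambda>0$, $\boldsymbol\beta\in\mathbb R^p$, $\mathbf M\in\mathbb R^{n\times p}$, $$\mu(\lambda,\xi,\boldsymbol\beta,\mathbf M)=(\xi+1)\min_{T\subseteq\{1,\dots,p\}}\inf_{0<\nu<1}\max\Big[\frac{\|\boldsymbol\beta_{T^c}\|_1}{\nu},\ \frac{\lambda|T|/\{2(1-\nu)\}}{\kappa^2\{(\xi+\nu)/(1-\nu),T,\mathbf M\}}\Big].$$ *)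

theory Defs
  imports "HOL-Analysis.Analysis"
begin

text \<open>Vectors in R^p are functions nat => real, indices 0..<p (the paper's 1..p);
  an n x p matrix is a function nat => nat => real, rows 0..<n, columns 0..<p.\<close>

definition l1_on :: "nat set \<Rightarrow> (nat \<Rightarrow> real) \<Rightarrow> real" where
  "l1_on T u = (\<Sum>i\<in>T. \<bar>u i\<bar>)"

definition mat_vec_norm2 :: "nat \<Rightarrow> nat \<Rightarrow> (nat \<Rightarrow> nat \<Rightarrow> real) \<Rightarrow> (nat \<Rightarrow> real) \<Rightarrow> real" where
  "mat_vec_norm2 n p M u = sqrt (\<Sum>i<n. (\<Sum>j<p. M i j * u j)\<^sup>2)"

definition cone :: "nat \<Rightarrow> real \<Rightarrow> nat set \<Rightarrow> (nat \<Rightarrow> real) set" where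
  "cone p \<xi> T = {u. (\<forall>i\<ge>p. u i = 0) \<and> u \<noteq> (\<lambda>_. 0) \<and>
       l1_on ({0..<p} - T) u \<le> \<xi> * l1_on T u}"

text \<open>Compatibility factor, valued in extended reals (infimum over an empty cone is +infinity).\<close>
definition kappa :: "nat \<Rightarrow> nat \<Rightarrow> real \<Rightarrow> nat set \<Rightarrow> (nat \<Rightarrow> nat \<Rightarrow> real) \<Rightarrow> ereal" where
  "kappa n p \<xi> T M = (INF u\<in>cone p \<xi> T.
      ereal ((mat_vec_norm2 n p M u / sqrt (real n)) / (l1_on T u / real (card T))))"

definition mu :: "nat \<Rightarrow> nat \<Rightarrow> real \<Rightarrow> real \<Rightarrow> (nat \<Rightarrow> real) \<Rightarrow> (nat \<Rightarrow> nat \<Rightarrow> real) \<Rightarrow> ereal" where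
  "mu n p lam \<xi> \<beta> M = ereal (\<xi> + 1) *
     (INF T\<in>{T. T \<subseteq> {0..<p}}. INF \<nu>\<in>{0<..<1::real}.
        max (ereal (l1_on ({0..<p} - T) \<beta> / \<nu>))
            (ereal (lam * real (card T) / (2 * (1 - \<nu>)))
               / (kappa n p ((\<xi> + \<nu>) / (1 - \<nu>)) T M)\<^sup>2))"

end

theory Submission
  imports Defs
begin

lemma kappa_nonneg: "0 \<le> kappa n p \<xi> T M"
  unfolding kappa_def
  by (rule INF_greatest) (auto simp: mat_vec_norm2_def l1_on_def intro!: divide_nonneg_nonneg sum_nonneg mult_nonneg_nonneg)

lemma cone_mono: "\<xi>1 \<le> \<xi>2 \<Longrightarrow> cone p \<xi>1 T \<subseteq> cone p \<xi>2 T"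
  unfolding cone_def
  by (auto elim!: order_trans intro!: mult_right_mono simp: l1_on_def sum_nonneg)

lemma kappa_mono: "\<xi>1 \<le> \<xi>2 \<Longrightarrow> kappa n p \<xi>2 T M \<le> kappa n p \<xi>1 T M"
  unfolding kappa_def by (rule INF_superset_mono[OF cone_mono]) auto

lemma l1_nonneg: "0 \<le> l1_on T u"
  unfolding l1_on_def by (auto intro: sum_nonneg)

lemma mu_nonneg:
  assumes "\<xi> > -1"
  shows "0 \<le> mu n p L \<xi> \<beta> M"
  unfolding mu_def
proof (rule ereal_0_le_mult)
  show "0 \<le> ereal (\<xi> + 1)" using assms by simp
  show "0 \<le> (INF T\<in>{T. T \<subseteq> {0..<p}}. INF \<nu>\<in>{0<..<1::real}.
        max (ereal (l1_on ({0..<p} - T) \<beta> / \<nu>))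
            (ereal (L * real (card T) / (2 * (1 - \<nu>)))
               / (kappa n p ((\<xi> + \<nu>) / (1 - \<nu>)) T M)\<^sup>2))"
    by (intro INF_greatest order_trans[OF _ max.cobounded1]) (auto intro!: divide_nonneg_nonneg l1_nonneg)
qed

lemma mu_bound:
  assumes "T \<subseteq> {0..<p}" "0 < \<nu>" "\<nu> < 1" "(\<xi>' + \<nu>) / (1 - \<nu>) \<le> \<xi>" "\<xi>' > 0" "L \<ge> 0"
  shows "mu n p L \<xi>' \<beta> M \<le> ereal (\<xi>'+1) * max (ereal (l1_on ({0..<p} - T) \<beta> / \<nu>))
            (ereal (L * real (card T) / (2 * (1 - \<nu>))) / (kappa n p \<xi> T M)\<^sup>2)"
proof -
  let ?k = "kappa n p ((\<xi>' + \<nu>) / (1 - \<nu>)) T M"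
  let ?K = "kappa n p \<xi> T M"
  have "(INF T\<in>{T. T \<subseteq> {0..<p}}. INF \<nu>\<in>{0<..<1::real}.
        max (ereal (l1_on ({0..<p} - T) \<beta> / \<nu>))
            (ereal (L * real (card T) / (2 * (1 - \<nu>)))
               / (kappa n p ((\<xi>' + \<nu>) / (1 - \<nu>)) T M)\<^sup>2))
     \<le> max (ereal (l1_on ({0..<p} - T) \<beta> / \<nu>))
            (ereal (L * real (card T) / (2 * (1 - \<nu>))) / ?k\<^sup>2)"
    using assms by (intro INF_lower2[of T] INF_lower) auto
  also have "\<dots> \<le> max (ereal (l1_on ({0..<p} - T) \<beta> / \<nu>))
            (ereal (L * real (card T) / (2 * (1 - \<nu>))) / ?K\<^sup>2)"
  proof -
    have K0: "0 \<le> ?K" by (rule kappa_nonneg)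
    have Kk: "?K \<le> ?k" using kappa_mono[OF assms(4)] by blast
    have "?K\<^sup>2 \<le> ?k\<^sup>2" unfolding power2_eq_square
      using K0 Kk by (intro ereal_mult_mono) auto
    then have "inverse (?k\<^sup>2) \<le> inverse (?K\<^sup>2)"
      using K0 by (intro ereal_inverse_antimono) auto
    moreover have "0 \<le> ereal (L * real (card T) / (2 * (1 - \<nu>)))" using assms by simp
    ultimately have "ereal (L * real (card T) / (2 * (1 - \<nu>))) / ?k\<^sup>2 \<le>
        ereal (L * real (card T) / (2 * (1 - \<nu>))) / ?K\<^sup>2"
      unfolding divide_ereal_def by (intro ereal_mult_left_mono)
    then show ?thesis by (rule max.mono[OF order_refl])
  qed
  finally show ?thesis unfolding mu_def using assms
    by (intro ereal_mult_left_mono) auto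
qed

lemma ereal_distrib_aux:
  assumes "s \<ge> 0" "a \<ge> 0"
  shows "ereal s * (ereal a * max (ereal x) (ereal y / K)) = ereal a * max (ereal (s*x)) (ereal (s*y) / K)"
proof -
  have d: "ereal s * (ereal y / K) = ereal (s*y) / K"
    unfolding divide_ereal_def by (simp add: mult.assoc[symmetric])
  show ?thesis
  proof (cases "ereal x \<le> ereal y / K")
    case True
    then have "ereal (s*x) \<le> ereal (s*y) / K"
      using ereal_mult_left_mono[OF True, of "ereal s"] assms d by simp
    then show ?thesis using True d by (simp add: max_def mult.left_commute)
  next
    case False
    then have "ereal (s*y) / K \<le> ereal (s*x)"
      using ereal_mult_left_mono[of "ereal y / K" "ereal x" "ereal s"] assms d by simp
    then show ?thesis using False d by (simp add: max_def mult.left_commute)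
  qed
qed


lemma max_mult_aux:
  fixes b a :: ereal
  assumes "0 \<le> b" "0 \<le> a" "x \<ge> 0" "y \<ge> 0"
  shows "max (ereal x * b) (ereal y * a) \<le> ereal (max x y) * max b a"
proof (rule max.boundedI)
  show "ereal x * b \<le> ereal (max x y) * max b a"
    using assms by (intro ereal_mult_mono) (auto simp: le_max_iff_disj)
  show "ereal y * a \<le> ereal (max x y) * max b a"
    using assms by (intro ereal_mult_mono) (auto simp: le_max_iff_disj)
qed

lemma ln_nat_nonneg: "0 \<le> ln (real (m::nat))"
  by (cases "m = 0") auto

theorem mainTheorem12:
  fixes A c \<xi> :: real
    and N :: "nat \<Rightarrow> 'k set"
    and p :: "nat \<Rightarrow> nat"
    and M :: "nat \<Rightarrow> 'k \<Rightarrow> nat \<Rightarrow> nat \<Rightarrow> real"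
    and S :: "nat \<Rightarrow> 'k \<Rightarrow> nat set"
    and \<beta> :: "nat \<Rightarrow> 'k \<Rightarrow> nat \<Rightarrow> real"
    and lam :: "nat \<Rightarrow> real"
  assumes "A > 0" and "c > 0"
    and "\<And>n k. k \<in> N n \<Longrightarrow> S n k \<subseteq> {0..<p n}"
    and "\<And>n. lam n = A * sqrt (ln (real (p n)) / real n)"
    and "\<xi> > c"
    and "(\<lambda>n. SUP k\<in>N n. ereal (real (card (S n k)) * sqrt ((ln (real (p n)))\<^sup>2 / real n))
              / (kappa n (p n) \<xi> (S n k) (M n k))\<^sup>2) \<longlonglongrightarrow> 0"
    and "(\<lambda>n. SUP k\<in>N n. ereal (sqrt (ln (real (p n))) * l1_on ({0..<p n} - S n k) (\<beta> n k)))
              \<longlonglongrightarrow> 0"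
  shows "\<exists>\<xi>'>c. \<forall>c1>0. (\<lambda>n. SUP k\<in>N n.
            ereal (sqrt (ln (real (p n)))) * mu n (p n) (c1 * lam n) \<xi>' (\<beta> n k) (M n k))
          \<longlonglongrightarrow> 0"
proof -
  define \<xi>' where "\<xi>' = (c + \<xi>) / 2"
  define \<nu> where "\<nu> = (\<xi> - c) / (2 * (1 + \<xi>))"
  have \<xi>'c: "\<xi>' > c" and \<xi>'0: "\<xi>' > 0" using assms unfolding \<xi>'_def by auto
  have \<nu>0: "0 < \<nu>" and \<nu>1: "\<nu> < 1" using assms unfolding \<nu>_def by (auto simp: field_simps)
  have \<nu>\<xi>: "(\<xi>' + \<nu>) / (1 - \<nu>) \<le> \<xi>"
  proof -
    have "\<nu> * (1 + \<xi>) = (\<xi> - c) / 2" unfolding \<nu>_def using assms by (auto simp: field_simps)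
    then have "\<xi>' + \<nu> \<le> \<xi> * (1 - \<nu>)" unfolding \<xi>'_def
    proof -
      have "\<xi> * (1 - \<nu>) - ((c + \<xi>) / 2 + \<nu>) = (\<xi> - c) / 2 - \<nu> * (1 + \<xi>)" by (simp add: algebra_simps)
      then show "(c + \<xi>) / 2 + \<nu> \<le> \<xi> * (1 - \<nu>)" using \<open>\<nu> * (1 + \<xi>) = (\<xi> - c) / 2\<close> by simp
    qed
    then show ?thesis using \<nu>1 by (simp add: divide_le_eq)
  qed
  have "\<forall>c1>0. (\<lambda>n. SUP k\<in>N n.
            ereal (sqrt (ln (real (p n)))) * mu n (p n) (c1 * lam n) \<xi>' (\<beta> n k) (M n k))
          \<longlonglongrightarrow> 0"
  proof (intro allI impI)
    fix c1 :: real assume c1: "c1 > 0"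
    define a where "a n k = ereal (real (card (S n k)) * sqrt ((ln (real (p n)))\<^sup>2 / real n))
              / (kappa n (p n) \<xi> (S n k) (M n k))\<^sup>2" for n k
    define b where "b n k = ereal (sqrt (ln (real (p n))) * l1_on ({0..<p n} - S n k) (\<beta> n k))" for n k
    define f where "f n k = ereal (sqrt (ln (real (p n)))) * mu n (p n) (c1 * lam n) \<xi>' (\<beta> n k) (M n k)" for n k
    define K0 where "K0 = c1 * A / (2 * (1 - \<nu>))"
    define D where "D = (\<xi>'+1) * max (1/\<nu>) K0"
    have K0pos: "K0 \<ge> 0" unfolding K0_def using c1 assms \<nu>1 by auto
    have D0: "D \<ge> 0" unfolding D_def using \<xi>'0 \<nu>0 K0pos by (intro mult_nonneg_nonneg) (auto simp: le_max_iff_disj)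
    have a0: "0 \<le> a n k" for n k unfolding a_def divide_ereal_def
      by (intro ereal_0_le_mult inverse_ereal_ge0I) (auto intro: kappa_nonneg ereal_0_le_mult simp: power2_eq_square)
    have b0: "0 \<le> b n k" for n k unfolding b_def using ln_nat_nonneg[of "p n"]
      by (auto intro!: mult_nonneg_nonneg l1_nonneg)
    have pw: "f n k \<le> ereal D * max (b n k) (a n k)" if k: "k \<in> N n" for n k
    proof -
      define l where "l = ln (real (p n))"
      define s where "s = sqrt l"
      define L where "L = c1 * lam n"
      define q where "q = real (card (S n k)) * sqrt (l\<^sup>2 / real n)"
      define KK where "KK = kappa n (p n) \<xi> (S n k) (M n k)"
      define l1 where "l1 = l1_on ({0..<p n} - S n k) (\<beta> n k)"
      have l0: "l \<ge> 0" unfolding l_def by (rule ln_nat_nonneg)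
      have s0: "s \<ge> 0" unfolding s_def using l0 by auto
      have L0: "L \<ge> 0" unfolding L_def using assms(4)[of n] c1 assms(1) l0 l_def by auto
      have sl: "s * sqrt (l / real n) = sqrt (l\<^sup>2 / real n)"
        unfolding s_def by (simp add: real_sqrt_mult[symmetric] power2_eq_square)
      have e1: "s * (l1 / \<nu>) = (1/\<nu>) * (s * l1)" by simp
      have e2: "s * (L * real (card (S n k)) / (2 * (1 - \<nu>))) = K0 * q"
        unfolding L_def assms(4)[of n] K0_def q_def l_def[symmetric] using sl[symmetric]
        by (simp add: field_simps)
      have "f n k \<le> ereal s * (ereal (\<xi>'+1) * max (ereal (l1 / \<nu>))
            (ereal (L * real (card (S n k)) / (2 * (1 - \<nu>))) / KK\<^sup>2))"
        unfolding f_def s_def l_def L_def l1_def KK_def using s0 l0 s_def ln_nat_nonneg[of "p n"]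
        by (intro ereal_mult_left_mono mu_bound assms(3) k \<nu>0 \<nu>1 \<nu>\<xi> \<xi>'0 L0[unfolded L_def]) auto
      also have "\<dots> = ereal (\<xi>'+1) * max (ereal (s * (l1 / \<nu>)))
            (ereal (s * (L * real (card (S n k)) / (2 * (1 - \<nu>)))) / KK\<^sup>2)"
        using s0 \<xi>'0 by (intro ereal_distrib_aux) auto
      also have "\<dots> = ereal (\<xi>'+1) * max (ereal (1/\<nu>) * b n k) (ereal K0 * a n k)"
        unfolding e1 e2 a_def b_def l_def[symmetric] s_def[symmetric] l1_def[symmetric]
          q_def[symmetric] KK_def[symmetric] divide_ereal_def
        by (simp add: mult.assoc[symmetric])
      also have "\<dots> \<le> ereal (\<xi>'+1) * (ereal (max (1/\<nu>) K0) * max (b n k) (a n k))"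
        using \<xi>'0 \<nu>0 K0pos by (intro ereal_mult_left_mono max_mult_aux a0 b0) auto
      also have "\<dots> = ereal D * max (b n k) (a n k)"
        unfolding D_def by (metis mult.assoc times_ereal.simps(1))
      finally show ?thesis .
    qed
    have up: "(SUP k\<in>N n. f n k) \<le> ereal D * max (SUP k\<in>N n. b n k) (SUP k\<in>N n. a n k)" for n
    proof (rule SUP_least)
      fix k assume k: "k \<in> N n"
      have "f n k \<le> ereal D * max (b n k) (a n k)" by (rule pw[OF k])
      also have "\<dots> \<le> ereal D * max (SUP k\<in>N n. b n k) (SUP k\<in>N n. a n k)"
        using D0 k by (intro ereal_mult_left_mono max.mono SUP_upper) auto
      finally show "f n k \<le> ereal D * max (SUP k\<in>N n. b n k) (SUP k\<in>N n. a n k)" .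
    qed
    have lim: "(\<lambda>n. ereal D * max (SUP k\<in>N n. b n k) (SUP k\<in>N n. a n k)) \<longlonglongrightarrow> ereal D * max 0 0"
      using assms(6,7) unfolding a_def b_def
      by (intro tendsto_cmult_ereal tendsto_max) auto
    have ev: "eventually (\<lambda>n. (SUP k\<in>N n. b n k) > -1) sequentially"
      using assms(7) unfolding b_def by (intro order_tendstoD(1)) auto
    have low: "eventually (\<lambda>n. 0 \<le> (SUP k\<in>N n. f n k)) sequentially"
      using ev
    proof eventually_elim
      case (elim n)
      then have "N n \<noteq> {}" by auto
      then obtain k where k: "k \<in> N n" by auto
      have "0 \<le> f n k" unfolding f_def using ln_nat_nonneg[of "p n"] \<xi>'0
        by (intro ereal_0_le_mult mu_nonneg) auto
      then show ?case using k by (intro SUP_upper2) auto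
    qed
    have "(\<lambda>n. SUP k\<in>N n. f n k) \<longlonglongrightarrow> 0"
      by (rule tendsto_sandwich[OF low _ tendsto_const]) (use up lim in auto)
    then show "(\<lambda>n. SUP k\<in>N n.
            ereal (sqrt (ln (real (p n)))) * mu n (p n) (c1 * lam n) \<xi>' (\<beta> n k) (M n k))
          \<longlonglongrightarrow> 0" unfolding f_def .
  qed
  then show ?thesis using \<xi>'c by blast
qed

end
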